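(* Let $u_1,\dots,u_n,v_1,\dots,v_n$ be i.i.d. $\mathcal N(0,I_d/d)$ in $\mathbb R^d$, $U=[u_1\cdots u_n]$, $V=[v_1\cdots v_n]$, and suppose $n\ge c\,d^2/\log d$ for a fixed $c>0$. For any fixed $\epsilon>0$, with probability $1-e^{-\Omega(d)}$ (for all sufficiently large $d$), $\|UV^\top\|_{F}\le(1+\epsilon)\sqrt n$.
   Context: $\|\cdot\|_F$ is the Frobenius norm. *)

theory Defs
  imports "HOL-Probability.Probability"
begin

text \<open>Index set for the entries of U and V (both d x n):
  (False, i, k) is the i-th coordinate of u_k, i.e. U i k;
  (True, j, k) is the j-th coordinate of v_k, i.e. V j k.\<close>
definition gidx :: "nat \<Rightarrow> nat \<Rightarrow> (bool \<times> nat \<times> nat) set" where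
  "gidx d n = UNIV \<times> {..<d} \<times> {..<n}"

text \<open>Joint law of u_1..u_n, v_1..v_n i.i.d. N(0, I_d/d): all 2dn coordinates
  are i.i.d. real normal with mean 0 and variance 1/d (standard deviation 1/sqrt d).\<close>
definition gauss_UV :: "nat \<Rightarrow> nat \<Rightarrow> ((bool \<times> nat \<times> nat) \<Rightarrow> real) measure" where
  "gauss_UV d n = PiM (gidx d n) (\<lambda>_. density lborel (normal_density 0 (1 / sqrt (real d))))"

definition matU :: "((bool \<times> nat \<times> nat) \<Rightarrow> real) \<Rightarrow> nat \<Rightarrow> nat \<Rightarrow> real" where
  "matU x i k = x (False, i, k)"

definition matV :: "((bool \<times> nat \<times> nat) \<Rightarrow> real) \<Rightarrow> nat \<Rightarrow> nat \<Rightarrow> real" where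
  "matV x j k = x (True, j, k)"

definition frob_UVt :: "nat \<Rightarrow> nat \<Rightarrow> ((bool \<times> nat \<times> nat) \<Rightarrow> real) \<Rightarrow> real" where
  "frob_UVt d n x = sqrt (\<Sum>i<d. \<Sum>j<d. (\<Sum>k<n. matU x i k * matV x j k)\<^sup>2)"

end

theory Submission
  imports Defs
begin

lemma nn_normal_one:
  assumes "0 < \<sigma>"
  shows "(\<integral>\<^sup>+x. ennreal (normal_density m \<sigma> x) \<partial>lborel) = 1"
  using assms by (subst nn_integral_eq_integral) auto

lemma L1:
  fixes \<sigma> t :: real assumes s: "0 < \<sigma>"
  shows "(\<integral>\<^sup>+x. ennreal (exp (t*x)) \<partial>density lborel (normal_density 0 \<sigma>)) = ennreal (exp (t\<^sup>2*\<sigma>\<^sup>2/2))"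
proof -
  have eq: "normal_density 0 \<sigma> x * exp (t*x) = exp (t\<^sup>2*\<sigma>\<^sup>2/2) * normal_density (t*\<sigma>\<^sup>2) \<sigma> x" for x
  proof -
    have "-(x - 0)\<^sup>2/ (2 * \<sigma>\<^sup>2) + t*x = t\<^sup>2*\<sigma>\<^sup>2/2 + (-(x - t*\<sigma>\<^sup>2)\<^sup>2/ (2 * \<sigma>\<^sup>2))"
      using s by (simp add: field_simps power2_eq_square)
    then show ?thesis unfolding normal_density_def
      by (simp add: exp_add[symmetric] mult_ac)
  qed
  have "(\<integral>\<^sup>+x. ennreal (exp (t*x)) \<partial>density lborel (normal_density 0 \<sigma>))
     = (\<integral>\<^sup>+x. ennreal (normal_density 0 \<sigma> x) * ennreal (exp (t*x)) \<partial>lborel)"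
    by (subst nn_integral_density) auto
  also have "\<dots> = (\<integral>\<^sup>+x. ennreal (exp (t\<^sup>2*\<sigma>\<^sup>2/2)) * ennreal (normal_density (t*\<sigma>\<^sup>2) \<sigma> x) \<partial>lborel)"
    by (intro nn_integral_cong) (simp add: ennreal_mult'[symmetric] eq)
  also have "\<dots> = ennreal (exp (t\<^sup>2*\<sigma>\<^sup>2/2))"
    by (subst nn_integral_cmult) (auto simp: nn_normal_one s)
  finally show ?thesis .
qed

lemma L2:
  fixes \<sigma> \<mu> :: real assumes s: "0 < \<sigma>" and m: "2*\<mu>*\<sigma>\<^sup>2 < 1"
  shows "(\<integral>\<^sup>+x. ennreal (exp (\<mu>*x\<^sup>2)) \<partial>density lborel (normal_density 0 \<sigma>)) = ennreal (1 / sqrt (1 - 2*\<mu>*\<sigma>\<^sup>2))"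
proof -
  define q where "q = 1 - 2*\<mu>*\<sigma>\<^sup>2"
  have q: "q > 0" using m by (simp add: q_def)
  define \<tau> where "\<tau> = \<sigma> / sqrt q"
  have tau: "\<tau> > 0" using s q by (simp add: \<tau>_def)
  have tau2: "\<tau>\<^sup>2 = \<sigma>\<^sup>2 / q" using q by (simp add: \<tau>_def power_divide)
  have eq: "normal_density 0 \<sigma> x * exp (\<mu>*x\<^sup>2) = (1 / sqrt q) * normal_density 0 \<tau> x" for x
  proof -
    have e1: "-(x - 0)\<^sup>2/ (2 * \<sigma>\<^sup>2) + \<mu>*x\<^sup>2 = -(x - 0)\<^sup>2/ (2 * \<tau>\<^sup>2)"
      using s q unfolding tau2 q_def by (simp add: field_simps power2_eq_square)
    have e2: "1 / sqrt (2 * pi * \<sigma>\<^sup>2) = (1 / sqrt q) * (1 / sqrt (2 * pi * \<tau>\<^sup>2))"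
      using s q unfolding tau2 by (simp add: real_sqrt_divide real_sqrt_mult field_simps)
    have "normal_density 0 \<sigma> x * exp (\<mu>*x\<^sup>2) = 1 / sqrt (2 * pi * \<sigma>\<^sup>2) * exp (-(x - 0)\<^sup>2/ (2 * \<sigma>\<^sup>2) + \<mu>*x\<^sup>2)"
      unfolding normal_density_def exp_add by simp
    also have "\<dots> = (1 / sqrt q) * normal_density 0 \<tau> x"
      unfolding e1 e2 normal_density_def by simp
    finally show ?thesis .
  qed
  have "(\<integral>\<^sup>+x. ennreal (exp (\<mu>*x\<^sup>2)) \<partial>density lborel (normal_density 0 \<sigma>))
     = (\<integral>\<^sup>+x. ennreal (normal_density 0 \<sigma> x) * ennreal (exp (\<mu>*x\<^sup>2)) \<partial>lborel)"
    by (subst nn_integral_density) auto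
  also have "\<dots> = (\<integral>\<^sup>+x. ennreal (1 / sqrt q) * ennreal (normal_density 0 \<tau> x) \<partial>lborel)"
  proof (intro nn_integral_cong)
    fix x
    have "ennreal (normal_density 0 \<sigma> x) * ennreal (exp (\<mu>*x\<^sup>2)) = ennreal (normal_density 0 \<sigma> x * exp (\<mu>*x\<^sup>2))"
      by (rule ennreal_mult[symmetric]) auto
    also have "\<dots> = ennreal ((1 / sqrt q) * normal_density 0 \<tau> x)" by (simp only: eq)
    also have "\<dots> = ennreal (1 / sqrt q) * ennreal (normal_density 0 \<tau> x)"
      by (rule ennreal_mult) (use q in auto)
    finally show "ennreal (normal_density 0 \<sigma> x) * ennreal (exp (\<mu>*x\<^sup>2)) = ennreal (1 / sqrt q) * ennreal (normal_density 0 \<tau> x)" .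
  qed
  also have "\<dots> = ennreal (1 / sqrt q)"
    by (subst nn_integral_cmult) (auto simp: nn_normal_one tau)
  finally show ?thesis by (simp add: q_def)
qed

lemma psf_normal: assumes "0 < \<sigma>" shows "product_sigma_finite (\<lambda>_. density lborel (normal_density 0 \<sigma>))"
proof -
  interpret prob_space "density lborel (normal_density 0 \<sigma>)" using assms by (rule prob_space_normal_density)
  show ?thesis by unfold_locales
qed

lemma lin_mgf:
  fixes J :: "'i set" and a :: "'i \<Rightarrow> real" and \<sigma> \<mu> :: real
  assumes fin: "finite J" and s: "0 < \<sigma>" and m: "0 \<le> \<mu>"
    and lt: "2*\<mu>*\<sigma>\<^sup>2*(\<Sum>\<iota>\<in>J. (a \<iota>)\<^sup>2) < 1"
  shows "(\<integral>\<^sup>+y. ennreal (exp (\<mu>*(\<Sum>\<iota>\<in>J. a \<iota> * y \<iota>)\<^sup>2)) \<partial>PiM J (\<lambda>_. density lborel (normal_density 0 \<sigma>)))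
     = ennreal (1 / sqrt (1 - 2*\<mu>*\<sigma>\<^sup>2*(\<Sum>\<iota>\<in>J. (a \<iota>)\<^sup>2)))"
proof -
  define N where "N = density lborel (normal_density 0 \<sigma>)"
  define N1 where "N1 = density lborel (normal_density 0 (1::real))"
  define P where "P = PiM J (\<lambda>_. N)"
  interpret PS: product_sigma_finite "\<lambda>_. N" unfolding N_def by (rule psf_normal[OF s])
  have pP: "prob_space P" unfolding P_def N_def
    by (rule prob_space_PiM) (rule prob_space_normal_density[OF s])
  have pN1: "prob_space N1" unfolding N1_def by (rule prob_space_normal_density) simp
  interpret pair_sigma_finite P N1
    using pP pN1 by (intro pair_sigma_finite.intro) (auto intro: prob_space_imp_sigma_finite)
  define r where "r = sqrt (2*\<mu>)"
  have r2: "r\<^sup>2 = 2*\<mu>" using m by (simp add: r_def)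
  have step1: "ennreal (exp (\<mu>*z\<^sup>2)) = (\<integral>\<^sup>+h. ennreal (exp ((r*z)*h)) \<partial>N1)" for z
    unfolding N1_def by (subst L1) (auto simp: power_mult_distrib r2)
  have step3: "(\<integral>\<^sup>+y. ennreal (exp (r*(\<Sum>\<iota>\<in>J. a \<iota> * y \<iota>)*h)) \<partial>P)
      = ennreal (exp ((\<mu>*\<sigma>\<^sup>2*(\<Sum>\<iota>\<in>J. (a \<iota>)\<^sup>2)) * h\<^sup>2))" for h
  proof -
    have "(\<integral>\<^sup>+y. ennreal (exp (r*(\<Sum>\<iota>\<in>J. a \<iota> * y \<iota>)*h)) \<partial>P)
       = (\<integral>\<^sup>+y. (\<Prod>\<iota>\<in>J. (\<lambda>\<iota> x. ennreal (exp ((r*h*a \<iota>)*x))) \<iota> (y \<iota>)) \<partial>P)"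
      by (intro nn_integral_cong)
         (simp add: prod_ennreal exp_sum[OF fin, symmetric] sum_distrib_left sum_distrib_right mult_ac)
    also have "\<dots> = (\<Prod>\<iota>\<in>J. integral\<^sup>N N (\<lambda>x. ennreal (exp ((r*h*a \<iota>)*x))))"
      unfolding P_def by (rule PS.product_nn_integral_prod[OF fin]) (auto simp: N_def)
    also have "\<dots> = (\<Prod>\<iota>\<in>J. ennreal (exp ((r*h*a \<iota>)\<^sup>2*\<sigma>\<^sup>2/2)))"
      unfolding N_def by (intro prod.cong refl L1 s)
    also have "\<dots> = ennreal (exp ((\<mu>*\<sigma>\<^sup>2*(\<Sum>\<iota>\<in>J. (a \<iota>)\<^sup>2)) * h\<^sup>2))"
      by (simp add: prod_ennreal exp_sum[OF fin, symmetric] sum_distrib_left sum_distrib_right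
            power_mult_distrib r2 mult_ac)
    finally show ?thesis .
  qed
  have "(\<integral>\<^sup>+y. ennreal (exp (\<mu>*(\<Sum>\<iota>\<in>J. a \<iota> * y \<iota>)\<^sup>2)) \<partial>P)
      = (\<integral>\<^sup>+y. (\<integral>\<^sup>+h. ennreal (exp (r*(\<Sum>\<iota>\<in>J. a \<iota> * y \<iota>)*h)) \<partial>N1) \<partial>P)"
    by (intro nn_integral_cong) (simp add: step1)
  also have "\<dots> = (\<integral>\<^sup>+h. (\<integral>\<^sup>+y. ennreal (exp (r*(\<Sum>\<iota>\<in>J. a \<iota> * y \<iota>)*h)) \<partial>P) \<partial>N1)"
    by (rule Fubini'[symmetric]) (simp add: N1_def P_def N_def)
  also have "\<dots> = (\<integral>\<^sup>+h. ennreal (exp ((\<mu>*\<sigma>\<^sup>2*(\<Sum>\<iota>\<in>J. (a \<iota>)\<^sup>2)) * h\<^sup>2)) \<partial>N1)"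
    by (simp add: step3)
  also have "\<dots> = ennreal (1 / sqrt (1 - 2*\<mu>*\<sigma>\<^sup>2*(\<Sum>\<iota>\<in>J. (a \<iota>)\<^sup>2)))"
    unfolding N1_def by (subst L2) (use lt in \<open>auto simp: mult_ac\<close>)
  finally show ?thesis unfolding P_def N_def .
qed

lemma blockprod:
  fixes M :: "'i \<Rightarrow> 'a measure" and J :: "'t \<Rightarrow> 'i set"
  assumes psf: "product_sigma_finite M"
  and fin: "finite T" and finJ: "\<And>t. t \<in> T \<Longrightarrow> finite (J t)"
  and disj: "disjoint_family_on J T"
  and meas: "\<And>t. t \<in> T \<Longrightarrow> f t \<in> borel_measurable (PiM (J t) M)"
  shows "(\<integral>\<^sup>+x. (\<Prod>t\<in>T. f t (restrict x (J t))) \<partial>PiM (\<Union>t\<in>T. J t) M)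
         = (\<Prod>t\<in>T. integral\<^sup>N (PiM (J t) M) (f t))"
  using fin finJ disj meas
proof (induction T rule: finite_induct)
  case empty
  then show ?case by (simp add: PiM_empty nn_integral_count_space_finite)
next
  case (insert t T)
  interpret product_sigma_finite M by (rule psf)
  define I where "I = (\<Union>s\<in>T. J s)"
  have finI: "finite I" using insert by (auto simp: I_def)
  have finJt: "finite (J t)" using insert by auto
  have disjI: "I \<inter> J t = {}"
    using insert.prems(2) insert.hyps(2) unfolding I_def disjoint_family_on_def by fastforce
  have U: "(\<Union>s\<in>insert t T. J s) = I \<union> J t" by (auto simp: I_def)
  note measT = insert.prems(3)
  have mT[measurable]: "\<And>s. s \<in> insert t T \<Longrightarrow> f s \<in> borel_measurable (PiM (J s) M)" by (rule measT)
  have IH: "(\<integral>\<^sup>+x. (\<Prod>s\<in>T. f s (restrict x (J s))) \<partial>PiM I M) = (\<Prod>s\<in>T. integral\<^sup>N (PiM (J s) M) (f s))"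
    unfolding I_def using insert by (intro insert.IH) (auto simp: disjoint_family_on_def)
  have mC: "(\<lambda>x. \<Prod>s\<in>T. f s (restrict x (J s))) \<in> borel_measurable (PiM I M)"
  proof (intro borel_measurable_prod_ennreal)
    fix s assume "s \<in> T"
    then have "J s \<subseteq> I" by (auto simp: I_def)
    then show "(\<lambda>x. f s (restrict x (J s))) \<in> borel_measurable (PiM I M)"
      using measurable_compose[OF measurable_restrict_subset[OF \<open>J s \<subseteq> I\<close>] mT[of s]] \<open>s \<in> T\<close> by simp
  qed
  have mA: "(\<lambda>x. \<Prod>s\<in>insert t T. f s (restrict x (J s))) \<in> borel_measurable (PiM (I \<union> J t) M)"
  proof (intro borel_measurable_prod_ennreal)
    fix s assume "s \<in> insert t T"
    then have "J s \<subseteq> I \<union> J t" by (auto simp: I_def)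
    then show "(\<lambda>x. f s (restrict x (J s))) \<in> borel_measurable (PiM (I \<union> J t) M)"
      using measurable_compose[OF measurable_restrict_subset[OF \<open>J s \<subseteq> I \<union> J t\<close>] mT[of s]] \<open>s \<in> insert t T\<close> by simp
  qed
  have r1: "restrict (merge I (J t) (x, y)) (J s) = restrict x (J s)" if "s \<in> T" for s x y
    using that disjI by (auto simp: restrict_def merge_def fun_eq_iff I_def)
  have r2: "restrict (merge I (J t) (x, y)) (J t) = restrict y (J t)" for x y
    using disjI by simp
  have r3: "integral\<^sup>N (PiM (J t) M) (\<lambda>y. f t (restrict y (J t))) = integral\<^sup>N (PiM (J t) M) (f t)"
    by (intro nn_integral_cong) (auto simp: space_PiM)
  have "(\<integral>\<^sup>+x. (\<Prod>s\<in>insert t T. f s (restrict x (J s))) \<partial>PiM (\<Union>s\<in>insert t T. J s) M)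
     = (\<integral>\<^sup>+x. (\<integral>\<^sup>+y. (\<Prod>s\<in>insert t T. f s (restrict (merge I (J t) (x, y)) (J s))) \<partial>PiM (J t) M) \<partial>PiM I M)"
    unfolding U by (rule product_nn_integral_fold[OF disjI finI finJt mA])
  also have "\<dots> = (\<integral>\<^sup>+x. (\<integral>\<^sup>+y. f t (restrict y (J t)) * (\<Prod>s\<in>T. f s (restrict x (J s))) \<partial>PiM (J t) M) \<partial>PiM I M)"
    using insert.hyps by (intro nn_integral_cong) (simp add: r1 r2)
  also have "\<dots> = (\<integral>\<^sup>+x. integral\<^sup>N (PiM (J t) M) (f t) * (\<Prod>s\<in>T. f s (restrict x (J s))) \<partial>PiM I M)"
  proof (intro nn_integral_cong)
    fix x
    have mf: "(\<lambda>y. f t (restrict y (J t))) \<in> borel_measurable (PiM (J t) M)"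
      using measurable_compose[OF measurable_restrict_subset[OF order_refl[of "J t"]] mT[of t]] by simp
    show "(\<integral>\<^sup>+y. f t (restrict y (J t)) * (\<Prod>s\<in>T. f s (restrict x (J s))) \<partial>PiM (J t) M)
       = integral\<^sup>N (PiM (J t) M) (f t) * (\<Prod>s\<in>T. f s (restrict x (J s)))"
      by (subst nn_integral_multc[OF mf]) (simp add: r3)
  qed
  also have "\<dots> = integral\<^sup>N (PiM (J t) M) (f t) * (\<Prod>s\<in>T. integral\<^sup>N (PiM (J s) M) (f s))"
    by (subst nn_integral_cmult[OF mC]) (simp add: IH)
  finally show ?case by (simp only: prod.insert[OF insert.hyps])
qed

lemma markov_nn:
  assumes "A \<in> sets M" and "\<And>x. x \<in> A \<Longrightarrow> 1 \<le> f x"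
  shows "emeasure M A \<le> (\<integral>\<^sup>+x. f x \<partial>M)"
proof -
  have "emeasure M A = (\<integral>\<^sup>+x. indicator A x \<partial>M)" using assms(1) by simp
  also have "\<dots> \<le> (\<integral>\<^sup>+x. f x \<partial>M)"
    by (intro nn_integral_mono) (auto simp: indicator_def assms(2))
  finally show ?thesis .
qed

lemma jensen_exp:
  fixes X :: "nat \<Rightarrow> nat \<Rightarrow> real" and d :: nat and l :: real
  assumes "d > 0"
  shows "exp (l * (\<Sum>i<d. \<Sum>j<d. (X i j)\<^sup>2)) \<le> (\<Prod>j<d. (1/d) * (\<Sum>i<d. exp (d*l*(X i j)\<^sup>2)))"
proof -
  have "exp (l * (\<Sum>i<d. \<Sum>j<d. (X i j)\<^sup>2)) = (\<Prod>j<d. exp (\<Sum>i<d. (1/d) *\<^sub>R (d*l*(X i j)\<^sup>2)))"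
  proof -
    have "l * (\<Sum>i<d. \<Sum>j<d. (X i j)\<^sup>2) = (\<Sum>j<d. \<Sum>i<d. l * (X i j)\<^sup>2)"
      by (subst sum.swap) (simp add: sum_distrib_left)
    also have "\<dots> = (\<Sum>j<d. \<Sum>i<d. (1/d) *\<^sub>R (d*l*(X i j)\<^sup>2))"
      using assms by (intro sum.cong refl) simp
    finally show ?thesis by (simp add: exp_sum)
  qed
  also have "\<dots> \<le> (\<Prod>j<d. (1/d) * (\<Sum>i<d. exp (d*l*(X i j)\<^sup>2)))"
  proof (intro prod_mono conjI)
    fix j assume "j \<in> {..<d}"
    have "exp (\<Sum>i<d. (1/d) *\<^sub>R (d*l*(X i j)\<^sup>2)) \<le> (\<Sum>i<d. (1/d) * exp (d*l*(X i j)\<^sup>2))"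
      using assms by (intro convex_on_sum[OF _ _ exp_convex]) auto
    then show "exp (\<Sum>i<d. (1/d) *\<^sub>R (d*l*(X i j)\<^sup>2)) \<le> (1/d) * (\<Sum>i<d. exp (d*l*(X i j)\<^sup>2))"
      by (simp add: sum_distrib_left)
  qed auto
  finally show ?thesis .
qed

definition NN :: "nat \<Rightarrow> real measure" where
  "NN d = density lborel (normal_density 0 (1 / sqrt (real d)))"

lemma gauss_UV_NN: "gauss_UV d n = PiM (gidx d n) (\<lambda>_. NN d)"
  by (simp add: gauss_UV_def NN_def)

lemma prob_NN: "d > 0 \<Longrightarrow> prob_space (NN d)"
  unfolding NN_def by (rule prob_space_normal_density) simp

lemma prob_G: "d > 0 \<Longrightarrow> prob_space (gauss_UV d n)"
  unfolding gauss_UV_NN by (rule prob_space_PiM) (rule prob_NN)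

lemma psf_NN: "d > 0 \<Longrightarrow> product_sigma_finite (\<lambda>_. NN d)"
  unfolding NN_def by (rule psf_normal) simp

lemma fin_gidx[simp]: "finite (gidx d n)"
  unfolding gidx_def by simp

lemma sets_NN[simp, measurable_cong]: "sets (NN d) = sets borel"
  by (simp add: NN_def)

lemma comp_meas: "\<iota> \<in> gidx d n \<Longrightarrow> (\<lambda>x. x \<iota>) \<in> borel_measurable (gauss_UV d n)"
  unfolding gauss_UV_NN
  using measurable_component_singleton[of \<iota> "gidx d n" "\<lambda>_. NN d"]
  by (simp add: measurable_cong_sets[OF refl sets_NN])

definition rowsq :: "nat \<Rightarrow> ((bool \<times> nat \<times> nat) \<Rightarrow> real) \<Rightarrow> nat \<Rightarrow> real" where
  "rowsq n x i = (\<Sum>k<n. (x (False, i, k))\<^sup>2)"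

lemma rowtail:
  assumes d: "d > 0" and i: "i < d" and m: "0 \<le> \<mu>" "2*\<mu>/d < 1"
  shows "emeasure (gauss_UV d n) {x \<in> space (gauss_UV d n). rowsq n x i > r}
     \<le> ennreal (exp (-\<mu>*r) * (1 / sqrt (1 - 2*\<mu>/d))^n)"
proof -
  interpret PS: product_sigma_finite "\<lambda>_. NN d" by (rule psf_NN[OF d])
  interpret PN: prob_space "NN d" by (rule prob_NN[OF d])
  define R where "R = (\<lambda>k. (False, i, k)) ` {..<n}"
  have Rsub: "R \<subseteq> gidx d n" using i by (auto simp: R_def gidx_def)
  have cardR: "card R = n" unfolding R_def by (subst card_image) (auto simp: inj_on_def)
  have rm[measurable]: "(\<lambda>x. rowsq n x i) \<in> borel_measurable (gauss_UV d n)"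
    unfolding rowsq_def
    by (intro borel_measurable_sum borel_measurable_power comp_meas) (auto simp: gidx_def i)
  define g where "g = (\<lambda>\<iota> z. if \<iota> \<in> R then ennreal (exp (\<mu>*z\<^sup>2)) else 1)"
  have "emeasure (gauss_UV d n) {x \<in> space (gauss_UV d n). rowsq n x i > r}
      \<le> (\<integral>\<^sup>+x. ennreal (exp (-\<mu>*r)) * ennreal (exp (\<mu> * rowsq n x i)) \<partial>gauss_UV d n)"
  proof (rule markov_nn)
    show "{x \<in> space (gauss_UV d n). rowsq n x i > r} \<in> sets (gauss_UV d n)"
      by measurable
    fix x assume "x \<in> {x \<in> space (gauss_UV d n). rowsq n x i > r}"
    then have "rowsq n x i > r" by simp
    then have "1 \<le> exp (-\<mu>*r) * exp (\<mu> * rowsq n x i)"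
      using m by (simp add: exp_add[symmetric] algebra_simps mult_left_mono)
    then show "1 \<le> ennreal (exp (-\<mu>*r)) * ennreal (exp (\<mu> * rowsq n x i))"
      by (simp add: ennreal_mult[symmetric])
  qed
  also have "\<dots> = ennreal (exp (-\<mu>*r)) * (\<integral>\<^sup>+x. ennreal (exp (\<mu> * rowsq n x i)) \<partial>gauss_UV d n)"
    by (rule nn_integral_cmult) measurable
  also have "(\<integral>\<^sup>+x. ennreal (exp (\<mu> * rowsq n x i)) \<partial>gauss_UV d n)
      = (\<integral>\<^sup>+x. (\<Prod>\<iota>\<in>gidx d n. g \<iota> (x \<iota>)) \<partial>PiM (gidx d n) (\<lambda>_. NN d))"
    unfolding gauss_UV_NN
  proof (intro nn_integral_cong)
    fix x
    have "(\<Prod>\<iota>\<in>gidx d n. g \<iota> (x \<iota>)) = (\<Prod>\<iota>\<in>R. ennreal (exp (\<mu>*(x \<iota>)\<^sup>2)))"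
      unfolding g_def using Rsub by (simp add: prod.If_cases Int_absorb1)
    also have "\<dots> = ennreal (exp (\<Sum>\<iota>\<in>R. \<mu>*(x \<iota>)\<^sup>2))"
      by (simp add: prod_ennreal exp_sum R_def)
    also have "(\<Sum>\<iota>\<in>R. \<mu>*(x \<iota>)\<^sup>2) = \<mu> * rowsq n x i"
      unfolding R_def rowsq_def by (subst sum.reindex) (auto simp: inj_on_def sum_distrib_left)
    finally show "ennreal (exp (\<mu> * rowsq n x i)) = (\<Prod>\<iota>\<in>gidx d n. g \<iota> (x \<iota>))" by simp
  qed
  also have "\<dots> = (\<Prod>\<iota>\<in>gidx d n. integral\<^sup>N (NN d) (g \<iota>))"
    by (rule PS.product_nn_integral_prod) (auto simp: g_def)
  also have "\<dots> = (\<Prod>\<iota>\<in>R. ennreal (1 / sqrt (1 - 2*\<mu>/d)))"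
  proof -
    have "integral\<^sup>N (NN d) (g \<iota>) = (if \<iota> \<in> R then ennreal (1 / sqrt (1 - 2*\<mu>/d)) else 1)" for \<iota>
    proof (cases "\<iota> \<in> R")
      case True
      have "integral\<^sup>N (NN d) (g \<iota>) = (\<integral>\<^sup>+z. ennreal (exp (\<mu>*z\<^sup>2)) \<partial>NN d)"
        using True by (simp add: g_def)
      also have "\<dots> = ennreal (1 / sqrt (1 - 2*\<mu>*(1 / sqrt (real d))\<^sup>2))"
        unfolding NN_def using d m by (intro L2) (auto simp: power_divide)
      finally show ?thesis using True d by (simp add: power_divide)
    next
      case False
      then show ?thesis by (simp add: g_def PN.emeasure_space_1)
    qed
    then show ?thesis using Rsub by (simp add: prod.If_cases Int_absorb1)
  qed
  also have "\<dots> = ennreal ((1 / sqrt (1 - 2*\<mu>/d))^n)"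
    using cardR m by (simp, subst ennreal_power) auto
  finally show ?thesis using m by (subst ennreal_mult) auto
qed

lemma comp_meas_all[measurable]: "(\<lambda>x. x \<iota>) \<in> borel_measurable (PiM I (\<lambda>_. NN d))"
proof (cases "\<iota> \<in> I")
  case True
  then show ?thesis
    using measurable_component_singleton[of \<iota> I "\<lambda>_. NN d"]
    by (simp add: measurable_cong_sets[OF refl sets_NN])
next
  case False
  have "(\<lambda>x. undefined) \<in> borel_measurable (PiM I (\<lambda>_. NN d))" by simp
  then show ?thesis
    by (rule measurable_cong[THEN iffD1, rotated]) (use False in \<open>auto simp: space_PiM\<close>)
qed

definition JV :: "nat \<Rightarrow> nat \<Rightarrow> (bool \<times> nat \<times> nat) set" where
  "JV n j = (\<lambda>k. (True, j, k)) ` {..<n}"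

lemma inner_bound:
  fixes u :: "(bool \<times> nat \<times> nat) \<Rightarrow> real"
  assumes d: "d > 0" and l: "0 \<le> l" and lr: "2*l*r < 1" and B: "\<forall>i<d. rowsq n u i \<le> r"
  shows "(\<integral>\<^sup>+v. ennreal (\<Prod>j<d. (1/d) * (\<Sum>i<d. exp (d*l*(\<Sum>k<n. u (False,i,k) * v (True,j,k))\<^sup>2)))
           \<partial>PiM ({True} \<times> {..<d} \<times> {..<n}) (\<lambda>_. NN d))
         \<le> ennreal ((1 / sqrt (1 - 2*l*r))^d)"
proof -
  interpret PS: product_sigma_finite "\<lambda>_. NN d" by (rule psf_NN[OF d])
  define a where "a = (\<lambda>i (\<iota>::bool \<times> nat \<times> nat). u (False, i, snd (snd \<iota>)))"
  define h where "h = (\<lambda>j (w::(bool \<times> nat \<times> nat) \<Rightarrow> real). ennreal ((1/d) * (\<Sum>i<d. exp (d*l*(\<Sum>\<iota>\<in>JV n j. a i \<iota> * w \<iota>)\<^sup>2))))"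
  have reidx: "(\<Sum>\<iota>\<in>JV n j. a i \<iota> * w \<iota>) = (\<Sum>k<n. u (False,i,k) * w (True,j,k))" for i j w
    unfolding JV_def a_def by (subst sum.reindex) (auto simp: inj_on_def)
  have sqidx: "(\<Sum>\<iota>\<in>JV n j. (a i \<iota>)\<^sup>2) = rowsq n u i" for i j
    unfolding JV_def a_def rowsq_def by (subst sum.reindex) (auto simp: inj_on_def)
  have UJ: "(\<Union>j\<in>{..<d}. JV n j) = {True} \<times> {..<d} \<times> {..<n}"
    by (auto simp: JV_def)
  have ltall: "2*l*rowsq n u i < 1" if "i < d" for i
  proof -
    have "2*l*rowsq n u i \<le> 2*l*r" using B that l by (simp add: mult_left_mono)
    then show ?thesis using lr by simp
  qed
  have disj: "disjoint_family_on (JV n) {..<d}"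
    by (auto simp: disjoint_family_on_def JV_def)
  have "(\<integral>\<^sup>+v. ennreal (\<Prod>j<d. (1/d) * (\<Sum>i<d. exp (d*l*(\<Sum>k<n. u (False,i,k) * v (True,j,k))\<^sup>2)))
           \<partial>PiM ({True} \<times> {..<d} \<times> {..<n}) (\<lambda>_. NN d))
      = (\<integral>\<^sup>+v. (\<Prod>j\<in>{..<d}. h j (restrict v (JV n j))) \<partial>PiM (\<Union>j\<in>{..<d}. JV n j) (\<lambda>_. NN d))"
    unfolding UJ
  proof (intro nn_integral_cong)
    fix v
    have "(\<Prod>j\<in>{..<d}. h j (restrict v (JV n j))) = (\<Prod>j\<in>{..<d}. ennreal ((1/d) * (\<Sum>i<d. exp (d*l*(\<Sum>k<n. u (False,i,k) * v (True,j,k))\<^sup>2))))"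
    proof (intro prod.cong refl)
      fix j
      have "(\<Sum>\<iota>\<in>JV n j. a i \<iota> * restrict v (JV n j) \<iota>) = (\<Sum>\<iota>\<in>JV n j. a i \<iota> * v \<iota>)" for i
        by (intro sum.cong) auto
      then show "h j (restrict v (JV n j)) = ennreal ((1/d) * (\<Sum>i<d. exp (d*l*(\<Sum>k<n. u (False,i,k) * v (True,j,k))\<^sup>2)))"
        unfolding h_def by (simp add: reidx)
    qed
    also have "\<dots> = ennreal (\<Prod>j<d. (1/d) * (\<Sum>i<d. exp (d*l*(\<Sum>k<n. u (False,i,k) * v (True,j,k))\<^sup>2)))"
      by (rule prod_ennreal) (auto intro!: divide_nonneg_nonneg sum_nonneg)
    finally show "ennreal (\<Prod>j<d. (1/d) * (\<Sum>i<d. exp (d*l*(\<Sum>k<n. u (False,i,k) * v (True,j,k))\<^sup>2)))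
        = (\<Prod>j\<in>{..<d}. h j (restrict v (JV n j)))" by simp
  qed
  also have "\<dots> = (\<Prod>j\<in>{..<d}. integral\<^sup>N (PiM (JV n j) (\<lambda>_. NN d)) (h j))"
  proof (rule blockprod[OF psf_NN[OF d]])
    show "disjoint_family_on (JV n) {..<d}" by (rule disj)
  qed (auto simp: h_def JV_def)
  also have "\<dots> = (\<Prod>j\<in>{..<d}. ennreal ((1/d) * (\<Sum>i<d. 1 / sqrt (1 - 2*l*rowsq n u i))))"
  proof (intro prod.cong refl)
    fix j
    have "integral\<^sup>N (PiM (JV n j) (\<lambda>_. NN d)) (h j)
        = (\<integral>\<^sup>+w. ennreal (1/d) * (\<Sum>i<d. ennreal (exp (d*l*(\<Sum>\<iota>\<in>JV n j. a i \<iota> * w \<iota>)\<^sup>2))) \<partial>PiM (JV n j) (\<lambda>_. NN d))"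
      unfolding h_def
    proof (intro nn_integral_cong)
      fix w
      have "(\<Sum>i<d. ennreal (exp (d*l*(\<Sum>\<iota>\<in>JV n j. a i \<iota> * w \<iota>)\<^sup>2))) = ennreal (\<Sum>i<d. exp (d*l*(\<Sum>\<iota>\<in>JV n j. a i \<iota> * w \<iota>)\<^sup>2))"
        by (rule sum_ennreal) auto
      then show "ennreal ((1/d) * (\<Sum>i<d. exp (d*l*(\<Sum>\<iota>\<in>JV n j. a i \<iota> * w \<iota>)\<^sup>2))) =
          ennreal (1/d) * (\<Sum>i<d. ennreal (exp (d*l*(\<Sum>\<iota>\<in>JV n j. a i \<iota> * w \<iota>)\<^sup>2)))"
        by (simp only:, subst ennreal_mult) (auto intro!: sum_nonneg)
    qed
    also have "\<dots> = ennreal (1/d) * (\<Sum>i<d. (\<integral>\<^sup>+w. ennreal (exp (d*l*(\<Sum>\<iota>\<in>JV n j. a i \<iota> * w \<iota>)\<^sup>2)) \<partial>PiM (JV n j) (\<lambda>_. NN d)))"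
      by (simp del: sum_ennreal add: nn_integral_cmult nn_integral_sum)
    also have "\<dots> = ennreal (1/d) * (\<Sum>i<d. ennreal (1 / sqrt (1 - 2*l*rowsq n u i)))"
    proof -
      have "(\<integral>\<^sup>+w. ennreal (exp (d*l*(\<Sum>\<iota>\<in>JV n j. a i \<iota> * w \<iota>)\<^sup>2)) \<partial>PiM (JV n j) (\<lambda>_. NN d))
          = ennreal (1 / sqrt (1 - 2*l*rowsq n u i))" if i: "i < d" for i
      proof -
        have rs: "2*(d*l)*(1 / sqrt (real d))\<^sup>2*(\<Sum>\<iota>\<in>JV n j. (a i \<iota>)\<^sup>2) = 2*l*rowsq n u i"
          using d by (simp add: sqidx power_divide)
        have lt: "2*l*rowsq n u i < 1"
        proof -
          have "2*l*rowsq n u i \<le> 2*l*r" using B i l by (simp add: mult_left_mono)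
          then show ?thesis using lr by simp
        qed
        have finJV: "finite (JV n j)" by (simp add: JV_def)
        show ?thesis unfolding NN_def
          by (subst lin_mgf[OF finJV]) (use d l lt in \<open>simp_all only: rs\<close>, auto)
      qed
      then show ?thesis by simp
    qed
    also have "\<dots> = ennreal ((1/d) * (\<Sum>i<d. 1 / sqrt (1 - 2*l*rowsq n u i)))"
    proof -
      have nn: "0 \<le> 1 / sqrt (1 - 2*l*rowsq n u i)" if "i \<in> {..<d}" for i
        using ltall[of i] that by auto
      have "(\<Sum>i<d. ennreal (1 / sqrt (1 - 2*l*rowsq n u i))) = ennreal (\<Sum>i<d. 1 / sqrt (1 - 2*l*rowsq n u i))"
        by (rule sum_ennreal) (rule nn)
      then show ?thesis
        by (simp only:, subst ennreal_mult) (auto intro!: sum_nonneg nn)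
    qed
    finally show "integral\<^sup>N (PiM (JV n j) (\<lambda>_. NN d)) (h j) = ennreal ((1/d) * (\<Sum>i<d. 1 / sqrt (1 - 2*l*rowsq n u i)))" .
  qed
  also have "\<dots> = ennreal (\<Prod>j<d. (1/d) * (\<Sum>i<d. 1 / sqrt (1 - 2*l*rowsq n u i)))"
    by (rule prod_ennreal) (auto intro!: divide_nonneg_nonneg sum_nonneg dest: ltall intro: less_imp_le)
  also have "\<dots> \<le> ennreal ((1 / sqrt (1 - 2*l*r))^d)"
  proof (intro ennreal_leI)
    have each: "1 / sqrt (1 - 2*l*rowsq n u i) \<le> 1 / sqrt (1 - 2*l*r)" if "i < d" for i
    proof -
      have "2*l*rowsq n u i \<le> 2*l*r" using B that l by (simp add: mult_left_mono)
      then have "sqrt (1 - 2*l*r) \<le> sqrt (1 - 2*l*rowsq n u i)" by simp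
      moreover have "0 < sqrt (1 - 2*l*r)" using lr by simp
      ultimately show ?thesis by (simp add: frac_le)
    qed
    have "(1/d) * (\<Sum>i<d. 1 / sqrt (1 - 2*l*rowsq n u i)) \<le> (1/d) * (\<Sum>i<d. 1 / sqrt (1 - 2*l*r))"
      by (intro mult_left_mono sum_mono each) auto
    also have "\<dots> = 1 / sqrt (1 - 2*l*r)" using d by simp
    finally have "(1/d) * (\<Sum>i<d. 1 / sqrt (1 - 2*l*rowsq n u i)) \<le> 1 / sqrt (1 - 2*l*r)" .
    then have "(\<Prod>j<d. (1/d) * (\<Sum>i<d. 1 / sqrt (1 - 2*l*rowsq n u i))) \<le> (\<Prod>j<d. 1 / sqrt (1 - 2*l*r))"
      by (intro prod_mono) (auto intro!: divide_nonneg_nonneg sum_nonneg dest: ltall intro: less_imp_le)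
    then show "(\<Prod>j<d. (1/d) * (\<Sum>i<d. 1 / sqrt (1 - 2*l*rowsq n u i))) \<le> (1 / sqrt (1 - 2*l*r))^d"
      by simp
  qed
  finally show ?thesis .
qed

definition SS :: "nat \<Rightarrow> nat \<Rightarrow> ((bool \<times> nat \<times> nat) \<Rightarrow> real) \<Rightarrow> real" where
  "SS d n x = (\<Sum>i<d. \<Sum>j<d. (\<Sum>k<n. matU x i k * matV x j k)\<^sup>2)"

lemma partA:
  assumes d: "d > 0" and l: "0 \<le> l" and lr: "2*l*r < 1"
  shows "emeasure (gauss_UV d n) {x \<in> space (gauss_UV d n). (\<forall>i<d. rowsq n x i \<le> r) \<and> t < SS d n x}
     \<le> ennreal (exp (-l*t) * (1 / sqrt (1 - 2*l*r))^d)"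
proof -
  interpret PS: product_sigma_finite "\<lambda>_. NN d" by (rule psf_NN[OF d])
  define IU where "IU = {False} \<times> {..<d} \<times> {..<n}"
  define IV where "IV = {True} \<times> {..<d} \<times> {..<n}"
  have gI: "gidx d n = IU \<union> IV"
    unfolding gidx_def IU_def IV_def by (auto intro: bool.exhaust)
  have disj: "IU \<inter> IV = {}" by (auto simp: IU_def IV_def)
  have fins: "finite IU" "finite IV" by (auto simp: IU_def IV_def)
  define C where "C = (1 / sqrt (1 - 2*l*r))^d"
  define F where "F = (\<lambda>x::(bool \<times> nat \<times> nat) \<Rightarrow> real. if (\<forall>i<d. rowsq n x i \<le> r)
     then ennreal (\<Prod>j<d. (1/d) * (\<Sum>i<d. exp (d*l*(\<Sum>k<n. x (False,i,k) * x (True,j,k))\<^sup>2))) else 0)"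
  have mF[measurable]: "F \<in> borel_measurable (PiM I (\<lambda>_. NN d))" for I
    unfolding F_def rowsq_def by measurable
  have "emeasure (gauss_UV d n) {x \<in> space (gauss_UV d n). (\<forall>i<d. rowsq n x i \<le> r) \<and> t < SS d n x}
      \<le> (\<integral>\<^sup>+x. ennreal (exp (-l*t)) * F x \<partial>gauss_UV d n)"
  proof (rule markov_nn)
    show "{x \<in> space (gauss_UV d n). (\<forall>i<d. rowsq n x i \<le> r) \<and> t < SS d n x} \<in> sets (gauss_UV d n)"
      unfolding gauss_UV_NN SS_def rowsq_def matU_def matV_def by measurable
    fix x assume x: "x \<in> {x \<in> space (gauss_UV d n). (\<forall>i<d. rowsq n x i \<le> r) \<and> t < SS d n x}"
    have J: "exp (l * SS d n x) \<le> (\<Prod>j<d. (1/d) * (\<Sum>i<d. exp (d*l*(\<Sum>k<n. x (False,i,k) * x (True,j,k))\<^sup>2)))"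
      unfolding SS_def matU_def matV_def by (rule jensen_exp[OF d])
    have "1 \<le> exp (-l*t) * exp (l * SS d n x)"
      using x l by (simp add: exp_add[symmetric] algebra_simps mult_left_mono)
    also have "\<dots> \<le> exp (-l*t) * (\<Prod>j<d. (1/d) * (\<Sum>i<d. exp (d*l*(\<Sum>k<n. x (False,i,k) * x (True,j,k))\<^sup>2)))"
      using J by simp
    finally show "1 \<le> ennreal (exp (-l*t)) * F x"
      using x unfolding F_def by (simp add: ennreal_mult[symmetric] prod_nonneg sum_nonneg)
  qed
  also have "\<dots> = ennreal (exp (-l*t)) * (\<integral>\<^sup>+x. F x \<partial>gauss_UV d n)"
    by (rule nn_integral_cmult) (simp add: gauss_UV_NN)
  also have "(\<integral>\<^sup>+x. F x \<partial>gauss_UV d n) = (\<integral>\<^sup>+u. (\<integral>\<^sup>+v. F (merge IU IV (u, v)) \<partial>PiM IV (\<lambda>_. NN d)) \<partial>PiM IU (\<lambda>_. NN d))"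
    unfolding gauss_UV_NN gI by (rule PS.product_nn_integral_fold[OF disj fins]) simp
  also have "\<dots> \<le> (\<integral>\<^sup>+u. ennreal C \<partial>PiM IU (\<lambda>_. NN d))"
  proof (intro nn_integral_mono)
    fix u :: "(bool \<times> nat \<times> nat) \<Rightarrow> real"
    have m1: "merge IU IV (u, v) (False, i, k) = u (False, i, k)" if "i < d" "k < n" for v :: "(bool \<times> nat \<times> nat) \<Rightarrow> real" and i k
      using that by (simp add: merge_def IU_def)
    have m2: "merge IU IV (u, v) (True, j, k) = v (True, j, k)" if "j < d" "k < n" for v :: "(bool \<times> nat \<times> nat) \<Rightarrow> real" and j k
      using that by (simp add: merge_def IU_def IV_def)
    have rs: "rowsq n (merge IU IV (u, v)) i = rowsq n u i" if "i < d" for v :: "(bool \<times> nat \<times> nat) \<Rightarrow> real" and i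
      unfolding rowsq_def using that by (intro sum.cong) (auto simp: m1)
    have Fm: "F (merge IU IV (u, v)) = (if (\<forall>i<d. rowsq n u i \<le> r)
     then ennreal (\<Prod>j<d. (1/d) * (\<Sum>i<d. exp (d*l*(\<Sum>k<n. u (False,i,k) * v (True,j,k))\<^sup>2))) else 0)" for v :: "(bool \<times> nat \<times> nat) \<Rightarrow> real"
    proof -
      have "(\<Prod>j<d. (1/d) * (\<Sum>i<d. exp (d*l*(\<Sum>k<n. merge IU IV (u, v) (False,i,k) * merge IU IV (u, v) (True,j,k))\<^sup>2)))
          = (\<Prod>j<d. (1/d) * (\<Sum>i<d. exp (d*l*(\<Sum>k<n. u (False,i,k) * v (True,j,k))\<^sup>2)))"
        by (intro prod.cong sum.cong refl arg_cong[where f="\<lambda>z. (1/d) * z"] arg_cong[where f=exp]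
            arg_cong[where f="\<lambda>z. d*l*z\<^sup>2"]) (auto simp: m1 m2)
      moreover have "(\<forall>i<d. rowsq n (merge IU IV (u, v)) i \<le> r) = (\<forall>i<d. rowsq n u i \<le> r)"
        using rs by auto
      ultimately show ?thesis unfolding F_def by (simp only:)
    qed
    show "(\<integral>\<^sup>+v. F (merge IU IV (u, v)) \<partial>PiM IV (\<lambda>_. NN d)) \<le> ennreal C"
    proof (cases "\<forall>i<d. rowsq n u i \<le> r")
      case True
      then show ?thesis using inner_bound[OF d l lr True] unfolding Fm by (simp add: C_def IV_def)
    next
      case False
      show ?thesis unfolding Fm if_not_P[OF False] by simp
    qed
  qed
  also have "\<dots> = ennreal C"
  proof -
    interpret PU: prob_space "PiM IU (\<lambda>_. NN d)" by (rule prob_space_PiM) (rule prob_NN[OF d])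
    show ?thesis by (simp add: PU.emeasure_space_1)
  qed
  finally have "emeasure (gauss_UV d n) {x \<in> space (gauss_UV d n). (\<forall>i<d. rowsq n x i \<le> r) \<and> t < SS d n x}
     \<le> ennreal (exp (-l*t)) * ennreal C"
    by (simp add: mult_left_mono)
  then show ?thesis unfolding C_def using lr by (subst ennreal_mult) auto
qed

lemma pow_bound:
  fixes x :: real assumes "0 \<le> x" "x \<le> 1/2"
  shows "(1 / sqrt (1 - x))^m \<le> exp (m * (x + 2*x\<^sup>2) / 2)"
proof -
  have pos: "0 < 1 - x" using assms by simp
  have "1 / sqrt (1 - x) = exp (- ln (1 - x) / 2)"
  proof -
    have "sqrt (1 - x) = exp (ln (1 - x) / 2)"
      using pos by (simp add: sqrt_def root_powr_inverse powr_def)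
    then show ?thesis by (simp add: exp_minus field_simps)
  qed
  moreover have "exp a ^ m = exp (real m * a)" for a
    by (simp add: exp_of_nat_mult)
  ultimately have "(1 / sqrt (1 - x))^m = exp (m * (- ln (1 - x) / 2))"
    by simp
  also have "\<dots> \<le> exp (m * (x + 2*x\<^sup>2) / 2)"
  proof -
    have "real m * (- x - 2*x\<^sup>2) \<le> real m * ln (1-x)"
      by (intro mult_left_mono ln_one_minus_pos_lower_bound assms) auto
    then have "m * (- ln (1 - x) / 2) \<le> m * (x + 2*x\<^sup>2) / 2"
      by (simp add: algebra_simps)
    then show ?thesis by simp
  qed
  finally show ?thesis .
qed

lemma measure_from_emeasure:
  assumes "emeasure M A \<le> ennreal b" "0 \<le> b"
  shows "measure M A \<le> b"
proof -
  have "enn2real (emeasure M A) \<le> enn2real (ennreal b)"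
    using assms by (intro enn2real_mono) auto
  then show ?thesis using assms(2) by (simp add: measure_def)
qed

lemma rows_real:
  assumes d: "d > 0" and i: "i < d" and e: "0 < e" "e \<le> 1"
  shows "measure (gauss_UV d n) {x \<in> space (gauss_UV d n). (1+e)*n/d < rowsq n x i} \<le> exp (- (real n * e\<^sup>2/16))"
proof -
  define \<mu> where "\<mu> = e/8 * d"
  have m: "0 \<le> \<mu>" "2*\<mu>/d < 1" using d e by (auto simp: \<mu>_def)
  have em: "emeasure (gauss_UV d n) {x \<in> space (gauss_UV d n). (1+e)*n/d < rowsq n x i}
      \<le> ennreal (exp (-\<mu>*((1+e)*n/d)) * (1 / sqrt (1 - 2*\<mu>/d))^n)"
    by (rule rowtail[OF d i m])
  have "exp (-\<mu>*((1+e)*n/d)) * (1 / sqrt (1 - 2*\<mu>/d))^n \<le> exp (-\<mu>*((1+e)*n/d)) * exp (n * (e/4 + 2*(e/4)\<^sup>2) / 2)"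
  proof -
    have h: "2*\<mu>/d = e/4" using d by (simp add: \<mu>_def)
    show ?thesis unfolding h using pow_bound[of "e/4" n] e by (intro mult_left_mono) auto
  qed
  also have "\<dots> = exp (- (real n * e\<^sup>2/16))"
    using d by (simp add: \<mu>_def exp_add[symmetric] field_simps power2_eq_square)
  finally show ?thesis
    by (intro measure_from_emeasure[OF order_trans[OF em]]) (auto intro: ennreal_leI)
qed

lemma A_real:
  assumes d: "d > 0" and n: "n > 0" and e: "0 < e" "e \<le> 1"
  shows "measure (gauss_UV d n) {x \<in> space (gauss_UV d n). (\<forall>i<d. rowsq n x i \<le> (1+e)*n/d) \<and> (1+e)\<^sup>2*n < SS d n x}
     \<le> exp (- (real d * e\<^sup>2/16))"
proof -
  define R where "R = (1+e)*n/d"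
  have Rpos: "R > 0" using d n e by (simp add: R_def)
  define l where "l = e/(8*R)"
  have l: "0 \<le> l" using e Rpos by (simp add: l_def)
  have lr: "2*l*R = e/4" using Rpos unfolding l_def by (simp add: field_simps)
  have em: "emeasure (gauss_UV d n) {x \<in> space (gauss_UV d n). (\<forall>i<d. rowsq n x i \<le> R) \<and> (1+e)\<^sup>2*n < SS d n x}
     \<le> ennreal (exp (-l*((1+e)\<^sup>2*n)) * (1 / sqrt (1 - 2*l*R))^d)"
    by (rule partA[OF d l]) (use lr e in simp)
  have h1: "(1+e)\<^sup>2*n = (1+e)*R*d" using d by (simp add: R_def power2_eq_square)
  have h2: "l*((1+e)*R*d) = e*(1+e)*d/8" using Rpos by (simp add: l_def field_simps)
  have "exp (-l*((1+e)\<^sup>2*n)) * (1 / sqrt (1 - 2*l*R))^d \<le> exp (-l*((1+e)\<^sup>2*n)) * exp (d * (e/4 + 2*(e/4)\<^sup>2) / 2)"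
    unfolding lr using pow_bound[of "e/4" d] e by (intro mult_left_mono) auto
  also have "\<dots> = exp (-(e*(1+e)*d/8) + d * (e/4 + 2*(e/4)\<^sup>2) / 2)"
  proof -
    have "-l*((1+e)\<^sup>2*n) = -(e*(1+e)*d/8)" using h1 h2 by simp
    then show ?thesis by (simp only: exp_add)
  qed
  also have "-(e*(1+e)*d/8) + d * (e/4 + 2*(e/4)\<^sup>2) / 2 = - (real d * e\<^sup>2/16)"
    by (simp add: field_simps power2_eq_square)
  finally show ?thesis unfolding R_def
    by (intro measure_from_emeasure[OF order_trans[OF em[unfolded R_def]]]) (auto intro: ennreal_leI)
qed

lemma final_arith:
  fixes c e :: real and d n :: nat
  assumes c: "c > 0" and e: "0 < e" "e \<le> 1"
    and dA: "real d \<ge> (2*(64+e\<^sup>2)/(c*e\<^sup>2))\<^sup>2" and de: "real d \<ge> 32/e\<^sup>2" and d2: "d \<ge> 2"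
    and n: "real n \<ge> c * (real d)\<^sup>2 / ln (real d)"
  shows "real d * exp (- (real n * e\<^sup>2/16)) + exp (- (real d * e\<^sup>2/16)) \<le> exp (- (e\<^sup>2/32) * real d)"
proof -
  define K where "K = e\<^sup>2/32"
  have dpos: "real d > 0" using d2 by simp
  have lnpos: "ln (real d) > 0" using d2 by simp
  have sq: "sqrt (real d) \<ge> 2*(64+e\<^sup>2)/(c*e\<^sup>2)"
    using dA by (metis real_le_rsqrt)
  have lnle: "ln (real d) \<le> 2 * sqrt (real d)"
  proof -
    have "ln (sqrt (real d)) \<le> sqrt (real d) - 1" using dpos by (intro ln_le_minus_one) simp
    moreover have "ln (real d) = 2 * ln (sqrt (real d))"
      using dpos by (simp add: ln_sqrt)
    ultimately show ?thesis by simp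
  qed
  have n2: "real n \<ge> c * real d * sqrt (real d) / 2"
  proof -
    have "c * real d * sqrt (real d) / 2 = c * (real d)\<^sup>2 / (2 * sqrt (real d))"
      using dpos by (simp add: field_simps power2_eq_square)
    also have "\<dots> \<le> c * (real d)\<^sup>2 / ln (real d)"
      using lnle lnpos c dpos by (intro divide_left_mono) auto
    finally have "c * real d * sqrt (real d) / 2 \<le> c * (real d)\<^sup>2 / ln (real d)" .
    then show ?thesis using n by linarith
  qed
  have key: "(64+e\<^sup>2) * real d \<le> real n * e\<^sup>2"
  proof -
    have "(64+e\<^sup>2) * real d = (c*e\<^sup>2/2) * (2*(64+e\<^sup>2)/(c*e\<^sup>2)) * real d"
      using c e by (simp add: field_simps)
    also have "\<dots> \<le> (c*e\<^sup>2/2) * sqrt (real d) * real d"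
      using sq c e dpos by (intro mult_right_mono mult_left_mono) auto
    also have "\<dots> = e\<^sup>2 * (c * real d * sqrt (real d) / 2)" by simp
    also have "\<dots> \<le> e\<^sup>2 * real n" using n2 e by (intro mult_left_mono) auto
    finally show ?thesis by (simp add: mult.commute)
  qed
  have t1: "real d * exp (- (real n * e\<^sup>2/16)) \<le> exp (-K*d) / 2"
  proof -
    have "2 * real d \<le> exp (2 * real d)" using exp_ge_add_one_self[of "2 * real d"] by linarith
    have "2 * real d + K * d \<le> n*e\<^sup>2/16"
    proof -
      have c2: "0 \<le> real d * e\<^sup>2" using dpos by simp
      show ?thesis using key unfolding K_def by (simp add: algebra_simps) (use c2 in linarith)
    qed
    then have "exp (2 * real d) * exp (K*d) \<le> exp (n*e\<^sup>2/16)" by (simp add: exp_add[symmetric])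
    then have "2 * real d * exp (K*d) \<le> exp (n*e\<^sup>2/16)"
      using \<open>2 * real d \<le> exp (2 * real d)\<close> by (smt (verit) exp_gt_zero mult_right_mono)
    then show ?thesis by (simp add: exp_minus field_simps exp_add[symmetric])
  qed
  have t2: "exp (- (real d * e\<^sup>2/16)) \<le> exp (-K*d) / 2"
  proof -
    have "1 \<le> K * d" using de e unfolding K_def by (simp add: field_simps)
    then have "2 \<le> exp (K*d)" using exp_ge_add_one_self[of "K*d"] by linarith
    moreover have "exp (- (real d * e\<^sup>2/16)) = exp (-K*d) * exp (-K*d)"
      unfolding K_def by (simp add: exp_add[symmetric])
    ultimately show ?thesis by (simp add: exp_minus field_simps)
  qed
  show ?thesis using t1 t2 unfolding K_def by simp
qed

theorem lemmaB1:
  fixes c \<epsilon> :: real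
  assumes "c > 0" and "\<epsilon> > 0"
  shows "\<exists>K > 0. \<exists>d0::nat. \<forall>d \<ge> d0. \<forall>n::nat.
           real n \<ge> c * (real d)\<^sup>2 / ln (real d) \<longrightarrow>
           prob_space.prob (gauss_UV d n)
             {x \<in> space (gauss_UV d n). frob_UVt d n x \<le> (1 + \<epsilon>) * sqrt (real n)}
           \<ge> 1 - exp (- K * real d)"
proof -
  define e where "e = min \<epsilon> 1"
  have e: "0 < e" "e \<le> 1" "e \<le> \<epsilon>" using assms by (auto simp: e_def)
  define A0 where "A0 = 2*(64+e\<^sup>2)/(c*e\<^sup>2)"
  define d0 where "d0 = nat \<lceil>A0\<^sup>2 + 32/e\<^sup>2 + 2\<rceil>"
  have Kpos: "e\<^sup>2/32 > 0" using e by simp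
  show ?thesis
  proof (intro exI[of _ "e\<^sup>2/32"] conjI Kpos exI[of _ d0] allI impI)
    fix d n :: nat
    assume dd0: "d0 \<le> d" and hn: "c * (real d)\<^sup>2 / ln (real d) \<le> real n"
    have "A0\<^sup>2 + 32/e\<^sup>2 + 2 \<le> real d0" unfolding d0_def by (rule real_nat_ceiling_ge)
    also have "\<dots> \<le> real d" using dd0 by simp
    finally have dbig: "A0\<^sup>2 + 32/e\<^sup>2 + 2 \<le> real d" .
    have pos1: "0 \<le> A0\<^sup>2" "0 \<le> 32/e\<^sup>2" by auto
    have dA: "real d \<ge> A0\<^sup>2" and de: "real d \<ge> 32/e\<^sup>2" and d2r: "real d \<ge> 2"
      using dbig pos1 by linarith+
    have d2: "d \<ge> 2" using d2r by simp
    have d: "d > 0" using d2 by simp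
    have lnpos: "ln (real d) > 0" using d2 by simp
    have "c * (real d)\<^sup>2 / ln (real d) > 0" using assms(1) d lnpos by simp
    then have n: "n > 0" using hn by linarith
    have arith: "real d * exp (- (real n * e\<^sup>2/16)) + exp (- (real d * e\<^sup>2/16)) \<le> exp (- (e\<^sup>2/32) * real d)"
      by (rule final_arith[OF assms(1) e(1,2) dA[unfolded A0_def] de d2 hn])
    interpret P: prob_space "gauss_UV d n" by (rule prob_G[OF d])
    define R where "R = (1+e)*n/d"
    define Rw where "Rw = (\<lambda>i. {x \<in> space (gauss_UV d n). R < rowsq n x i})"
    define Ap where "Ap = {x \<in> space (gauss_UV d n). (\<forall>i<d. rowsq n x i \<le> R) \<and> (1+e)\<^sup>2*n < SS d n x}"
    define good where "good = {x \<in> space (gauss_UV d n). frob_UVt d n x \<le> (1 + \<epsilon>) * sqrt (real n)}"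
    have good_sets: "good \<in> P.events"
      unfolding good_def gauss_UV_NN frob_UVt_def matU_def matV_def by measurable
    have Rw_sets: "Rw i \<in> P.events" for i
      unfolding Rw_def gauss_UV_NN rowsq_def by measurable
    have Ap_sets: "Ap \<in> P.events"
      unfolding Ap_def gauss_UV_NN rowsq_def SS_def matU_def matV_def by measurable
    have sub: "space (gauss_UV d n) - good \<subseteq> (\<Union>i\<in>{..<d}. Rw i) \<union> Ap"
    proof
      fix x assume x: "x \<in> space (gauss_UV d n) - good"
      show "x \<in> (\<Union>i\<in>{..<d}. Rw i) \<union> Ap"
      proof (cases "\<forall>i<d. rowsq n x i \<le> R")
        case False
        then obtain i where "i < d" "R < rowsq n x i" by (auto simp: not_le)
        then show ?thesis using x by (auto simp: Rw_def)
      next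
        case True
        have fr: "frob_UVt d n x = sqrt (SS d n x)" by (simp add: frob_UVt_def SS_def)
        have "(1+e) * sqrt (real n) \<le> (1+\<epsilon>) * sqrt (real n)"
          using e by (intro mult_right_mono) auto
        moreover have "\<not> frob_UVt d n x \<le> (1 + \<epsilon>) * sqrt (real n)" using x by (simp add: good_def)
        ultimately have "(1+e) * sqrt (real n) < sqrt (SS d n x)" unfolding fr by linarith
        moreover have "(1+e) * sqrt (real n) = sqrt ((1+e)\<^sup>2 * n)"
          using e by (simp add: real_sqrt_mult)
        ultimately have "(1+e)\<^sup>2 * n < SS d n x" by simp
        then show ?thesis using x True by (auto simp: Ap_def)
      qed
    qed
    have "P.prob (space (gauss_UV d n) - good) \<le> P.prob ((\<Union>i\<in>{..<d}. Rw i) \<union> Ap)"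
      using sub Rw_sets Ap_sets by (intro P.finite_measure_mono) auto
    also have "\<dots> \<le> P.prob (\<Union>i\<in>{..<d}. Rw i) + P.prob Ap"
      using Rw_sets Ap_sets by (intro measure_Un_le) auto
    also have "P.prob (\<Union>i\<in>{..<d}. Rw i) \<le> (\<Sum>i<d. P.prob (Rw i))"
      using Rw_sets by (intro P.finite_measure_subadditive_finite) auto
    also have "(\<Sum>i<d. P.prob (Rw i)) \<le> (\<Sum>i<d. exp (- (real n * e\<^sup>2/16)))"
    proof (intro sum_mono)
      fix i assume "i \<in> {..<d}"
      then show "P.prob (Rw i) \<le> exp (- (real n * e\<^sup>2/16))"
        unfolding Rw_def R_def by (intro rows_real[OF d _ e(1,2)]) simp
    qed
    also have "P.prob Ap \<le> exp (- (real d * e\<^sup>2/16))"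
      unfolding Ap_def R_def by (rule A_real[OF d n e(1,2)])
    finally have "P.prob (space (gauss_UV d n) - good) \<le> real d * exp (- (real n * e\<^sup>2/16)) + exp (- (real d * e\<^sup>2/16))"
      by simp
    also note arith
    finally have bad: "P.prob (space (gauss_UV d n) - good) \<le> exp (- (e\<^sup>2/32) * real d)" .
    have "P.prob good = 1 - P.prob (space (gauss_UV d n) - good)"
      using P.prob_compl[OF good_sets] by simp
    then show "1 - exp (- (e\<^sup>2/32) * real d) \<le> P.prob {x \<in> space (gauss_UV d n). frob_UVt d n x \<le> (1 + \<epsilon>) * sqrt (real n)}"
      using bad unfolding good_def by linarith
  qed
qed

end
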